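(* Let $m=m(n)$ be a function of $n$. (i) Suppose that $\frac{4n}{m}=\log n+\omega$, where $\omega=\omega(n)\rightarrow\infty$ as $n\rightarrow\infty$. Then asymptotically almost surely $G(n,m,2)$ is connected. (ii) Suppose that $\frac{4n}{m}=\log n-\omega$, where $\omega=\omega(n)\rightarrow\infty$ as $n\rightarrow\infty$. Then asymptotically almost surely $G(n,m,2)$ is not connected.
   Context: The uniform random intersection graph $G(n,m,k)$ (for positive integers $k\le m$) is the random graph on a set $V$ of $n$ nodes defined as follows: fix a set $M$ of $m$ colours; to each node $v\in V$ assign a subset $F_v\subseteq M$ of exactly $k$ distinct colours, chosen uniformly at random among all $k$-subsets of $M$, independently for different nodes; distinct nodes $u,v$ are joined by an edge if and only if $F_u\cap F_v\neq\emptyset$. Here $k=2$. An event holds asymptotically almost surely if its probability tends to $1$ as $n\rightarrow\infty$. Here $\log$ denotes the natural logarithm. *)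

theory Defs
  imports "HOL-Probability.Probability"
begin

definition colour_assignments :: "nat \<Rightarrow> nat \<Rightarrow> nat \<Rightarrow> (nat \<Rightarrow> nat set) set" where
  "colour_assignments n m k = PiE {..<n} (\<lambda>_. {S. S \<subseteq> {..<m} \<and> card S = k})"

text \<open>Uniform random intersection graph G(n,m,k), represented by its colour assignment.\<close>
definition RIG :: "nat \<Rightarrow> nat \<Rightarrow> nat \<Rightarrow> (nat \<Rightarrow> nat set) pmf" where
  "RIG n m k = pmf_of_set (colour_assignments n m k)"

definition rig_edges :: "nat \<Rightarrow> (nat \<Rightarrow> nat set) \<Rightarrow> (nat \<times> nat) set" where
  "rig_edges n F = {(u, v). u < n \<and> v < n \<and> u \<noteq> v \<and> F u \<inter> F v \<noteq> {}}"

definition graph_connected :: "'a set \<Rightarrow> ('a \<times> 'a) set \<Rightarrow> bool" where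
  "graph_connected V E \<longleftrightarrow> (\<forall>u\<in>V. \<forall>v\<in>V. (u, v) \<in> E\<^sup>*)"

definition rig_connected :: "nat \<Rightarrow> (nat \<Rightarrow> nat set) \<Rightarrow> bool" where
  "rig_connected n F \<longleftrightarrow> graph_connected {..<n} (rig_edges n F)"

end

theory Submission
  imports Defs "HOL-Real_Asymp.Real_Asymp"
begin

definition Kc :: "nat \<Rightarrow> nat set set" where
  "Kc m = {S. S \<subseteq> {..<m} \<and> card S = 2}"

lemma finite_Kc: "finite (Kc m)"
  unfolding Kc_def by (rule finite_subset[of _ "Pow {..<m}"]) auto

lemma card_Kc: "card (Kc m) = m choose 2"
  unfolding Kc_def using n_subsets[of "{..<m}" 2] by simp

lemma Kc_ne: "2 \<le> m \<Longrightarrow> Kc m \<noteq> {}"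
proof -
  assume "2 \<le> m"
  then have "{0,1} \<in> Kc m" unfolding Kc_def by auto
  then show ?thesis by blast
qed

lemma Omega_eq: "colour_assignments n m 2 = PiE {..<n} (\<lambda>_. Kc m)"
  unfolding colour_assignments_def Kc_def by simp

lemma finite_Omega: "finite (colour_assignments n m 2)"
  unfolding Omega_eq by (intro finite_PiE finite_Kc) auto

lemma card_Omega: "card (colour_assignments n m 2) = (m choose 2) ^ n"
  unfolding Omega_eq by (simp add: card_PiE card_Kc)

lemma Omega_ne: "2 \<le> m \<Longrightarrow> colour_assignments n m 2 \<noteq> {}"
  unfolding Omega_eq using Kc_ne by (simp add: PiE_eq_empty_iff)

lemma prob_RIG: "2 \<le> m \<Longrightarrow> measure_pmf.prob (RIG n m 2) P =
   card (colour_assignments n m 2 \<inter> P) / card (colour_assignments n m 2)"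
  unfolding RIG_def using finite_Omega Omega_ne by (simp add: measure_pmf_of_set)

lemma card_prod_event:
  "card (colour_assignments n m 2 \<inter> {F. \<forall>v<n. F v \<in> X v}) = (\<Prod>v<n. card (Kc m \<inter> X v))"
proof -
  have "colour_assignments n m 2 \<inter> {F. \<forall>v<n. F v \<in> X v} = PiE {..<n} (\<lambda>v. Kc m \<inter> X v)"
    unfolding Omega_eq by (auto simp: PiE_def Pi_def)
  then show ?thesis by (simp add: card_PiE)
qed

lemma real_choose_two: "real (n choose 2) = real n * (real n - 1) / 2"
proof (induction n)
  case 0 then show ?case by simp
next
  case (Suc n)
  have "Suc n choose 2 = n + (n choose 2)"
    using binomial_Suc_Suc[of n 1] by (simp only: numeral_2_eq_2 One_nat_def binomial_1)
  then show ?case using Suc by (simp add: field_simps)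
qed

definition EV :: "nat \<Rightarrow> nat set \<Rightarrow> nat set \<Rightarrow> (nat \<Rightarrow> nat set) set" where
  "EV n A T = {F. \<forall>v<n. F v \<in> (if v \<in> T then {S. S \<subseteq> A} else {S. S \<subseteq> A \<or> S \<inter> A = {}})}"

definition AA :: "nat \<Rightarrow> nat set set" where
  "AA m = {A. A \<subseteq> {..<m} \<and> 2 \<le> card A \<and> 2 * card A \<le> m}"

definition TT :: "nat \<Rightarrow> nat \<Rightarrow> nat set set" where
  "TT n a = {T. T \<subseteq> {..<n} \<and> card T = (a + 1) div 2}"

lemma Omega_D: "F \<in> colour_assignments n m 2 \<Longrightarrow> v < n \<Longrightarrow> F v \<subseteq> {..<m} \<and> card (F v) = 2"
  unfolding colour_assignments_def by (auto simp: PiE_def Pi_def)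

lemma side:
  assumes F: "F \<in> colour_assignments n m 2" and S: "S \<subseteq> {..<n}" and u: "u \<in> S"
    and cross: "\<And>w v. w \<in> S \<Longrightarrow> v < n \<Longrightarrow> v \<notin> S \<Longrightarrow> F w \<inter> F v = {}"
    and half: "2 * card (\<Union>(F ` S)) \<le> m"
  shows "\<exists>A T. A \<in> AA m \<and> T \<in> TT n (card A) \<and> F \<in> EV n A T"
proof -
  define A where "A = \<Union>(F ` S)"
  have fS: "finite S" using S finite_subset by blast
  have sub: "A \<subseteq> {..<m}" using Omega_D[OF F] S unfolding A_def by blast
  have finA: "finite A" using sub finite_subset by blast
  have "card A \<le> (\<Sum>w\<in>S. card (F w))" unfolding A_def by (rule card_UN_le[OF fS])
  also have "\<dots> = (\<Sum>w\<in>S. 2)" using Omega_D[OF F] S by (intro sum.cong) auto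
  finally have cA: "card A \<le> 2 * card S" by simp
  have "F u \<subseteq> A" using u unfolding A_def by blast
  then have "card (F u) \<le> card A" using finA card_mono by blast
  then have c2: "2 \<le> card A" using Omega_D[OF F, of u] u S by auto
  have "(card A + 1) div 2 \<le> card S" using cA by linarith
  then obtain T where T: "T \<subseteq> S" "card T = (card A + 1) div 2"
    using obtain_subset_with_card_n by metis
  have "F \<in> EV n A T"
    unfolding EV_def using T cross unfolding A_def by auto
  moreover have "A \<in> AA m" unfolding AA_def using sub c2 half A_def by auto
  moreover have "T \<in> TT n (card A)" unfolding TT_def using T S by auto
  ultimately show ?thesis by blast
qed

lemma disc_cover:
  assumes F: "F \<in> colour_assignments n m 2" and nc: "\<not> rig_connected n F"
  shows "\<exists>A T. A \<in> AA m \<and> T \<in> TT n (card A) \<and> F \<in> EV n A T"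
proof -
  let ?E = "rig_edges n F"
  obtain u v where uv: "u < n" "v < n" "(u, v) \<notin> ?E\<^sup>*"
    using nc unfolding rig_connected_def graph_connected_def by auto
  define S where "S = {w. w < n \<and> (u, w) \<in> ?E\<^sup>*}"
  define R where "R = {..<n} - S"
  have crossS: "F w \<inter> F x = {}" if "w \<in> S" "x < n" "x \<notin> S" for w x
  proof (rule ccontr)
    assume ne: "F w \<inter> F x \<noteq> {}"
    have "w \<noteq> x" using that by auto
    then have "(w, x) \<in> ?E" using ne that unfolding rig_edges_def S_def by auto
    then have "(u, x) \<in> ?E\<^sup>*" using that(1) unfolding S_def by (auto intro: rtrancl_into_rtrancl)
    then show False using that unfolding S_def by auto
  qed
  have crossR: "F w \<inter> F x = {}" if "w \<in> R" "x < n" "x \<notin> R" for w x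
    using crossS[of x w] that unfolding R_def by auto
  have uS: "u \<in> S" "S \<subseteq> {..<n}" unfolding S_def using uv by auto
  have vR: "v \<in> R" "R \<subseteq> {..<n}" unfolding R_def S_def using uv by auto
  have disj: "\<Union>(F ` S) \<inter> \<Union>(F ` R) = {}" using crossS unfolding R_def by blast
  have subS: "\<Union>(F ` S) \<subseteq> {..<m}" using Omega_D[OF F] uS by blast
  have subR: "\<Union>(F ` R) \<subseteq> {..<m}" using Omega_D[OF F] vR by blast
  have "card (\<Union>(F ` S)) + card (\<Union>(F ` R)) = card (\<Union>(F ` S) \<union> \<Union>(F ` R))"
    using disj subS subR by (intro card_Un_disjoint[symmetric]) (auto intro: finite_subset)
  also have "\<dots> \<le> m" using subS subR card_mono[of "{..<m}"] by fastforce
  finally have sum: "card (\<Union>(F ` S)) + card (\<Union>(F ` R)) \<le> m" .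
  show ?thesis
  proof (cases "2 * card (\<Union>(F ` S)) \<le> m")
    case True
    then show ?thesis using side[OF F uS(2) uS(1) crossS] by blast
  next
    case False
    then have "2 * card (\<Union>(F ` R)) \<le> m" using sum by linarith
    then show ?thesis using side[OF F vR(2) vR(1) crossR] by blast
  qed
qed

lemma card_Kc_sub: "A \<subseteq> {..<m} \<Longrightarrow> card (Kc m \<inter> {S. S \<subseteq> A}) = card A choose 2"
proof -
  assume A: "A \<subseteq> {..<m}"
  have "Kc m \<inter> {S. S \<subseteq> A} = {S. S \<subseteq> A \<and> card S = 2}" using A unfolding Kc_def by auto
  moreover have "finite A" using A finite_subset by blast
  ultimately show ?thesis by (simp add: n_subsets)
qed

lemma card_Kc_disj: "A \<subseteq> {..<m} \<Longrightarrow> card (Kc m \<inter> {S. S \<inter> A = {}}) = (m - card A) choose 2"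
proof -
  assume A: "A \<subseteq> {..<m}"
  have "Kc m \<inter> {S. S \<inter> A = {}} = {S. S \<subseteq> {..<m} - A \<and> card S = 2}" unfolding Kc_def by auto
  moreover have "card ({..<m} - A) = m - card A" using A by (simp add: card_Diff_subset finite_subset)
  ultimately show ?thesis by (simp add: n_subsets)
qed

lemma card_Kc_or: assumes A: "A \<subseteq> {..<m}"
  shows "card (Kc m \<inter> {S. S \<subseteq> A \<or> S \<inter> A = {}}) = (card A choose 2) + ((m - card A) choose 2)"
proof -
  have eq: "Kc m \<inter> {S. S \<subseteq> A \<or> S \<inter> A = {}} = (Kc m \<inter> {S. S \<subseteq> A}) \<union> (Kc m \<inter> {S. S \<inter> A = {}})" by auto
  have d: "(Kc m \<inter> {S. S \<subseteq> A}) \<inter> (Kc m \<inter> {S. S \<inter> A = {}}) = {}"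
  proof (rule ccontr)
    assume "\<not> ?thesis"
    then obtain S where "S \<in> Kc m" "S \<subseteq> A" "S \<inter> A = {}" by blast
    then have "S = {}" "card S = 2" unfolding Kc_def by auto
    then show False by simp
  qed
  show ?thesis unfolding eq
    by (subst card_Un_disjoint) (use d finite_Kc card_Kc_sub[OF A] card_Kc_disj[OF A] in auto)
qed

lemma card_EV:
  assumes A: "A \<subseteq> {..<m}" and T: "T \<subseteq> {..<n}"
  shows "card (colour_assignments n m 2 \<inter> EV n A T) =
     (card A choose 2) ^ card T * ((card A choose 2) + ((m - card A) choose 2)) ^ (n - card T)"
proof -
  let ?X = "\<lambda>v. if v \<in> T then {S. S \<subseteq> A} else {S. S \<subseteq> A \<or> S \<inter> A = {}}"
  have "EV n A T = {F. \<forall>v<n. F v \<in> ?X v}" unfolding EV_def by simp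
  then have "card (colour_assignments n m 2 \<inter> EV n A T) = (\<Prod>v<n. card (Kc m \<inter> ?X v))"
    by (simp add: card_prod_event)
  also have "\<dots> = (\<Prod>v\<in>T. card (Kc m \<inter> ?X v)) * (\<Prod>v\<in>{..<n} - T. card (Kc m \<inter> ?X v))"
    using T by (metis (no_types, lifting) finite_lessThan prod.subset_diff mult.commute)
  also have "(\<Prod>v\<in>T. card (Kc m \<inter> ?X v)) = (\<Prod>v\<in>T. card A choose 2)"
    by (intro prod.cong) (auto simp: card_Kc_sub[OF A])
  also have "(\<Prod>v\<in>{..<n} - T. card (Kc m \<inter> ?X v)) = (\<Prod>v\<in>{..<n} - T. (card A choose 2) + ((m - card A) choose 2))"
    by (intro prod.cong) (auto simp: card_Kc_or[OF A])
  also have "card ({..<n} - T) = n - card T" using T by (simp add: card_Diff_subset finite_subset)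
  ultimately show ?thesis by simp
qed

lemma disc_count:
  assumes m: "2 \<le> m"
  shows "card (colour_assignments n m 2 \<inter> {F. \<not> rig_connected n F}) \<le>
    (\<Sum>a\<in>{2..m div 2}. (m choose a) * ((n choose ((a + 1) div 2)) *
       ((a choose 2) ^ ((a + 1) div 2) * ((a choose 2) + ((m - a) choose 2)) ^ (n - (a + 1) div 2))))"
proof -
  let ?\<Omega> = "colour_assignments n m 2"
  have finAA: "finite (AA m)" unfolding AA_def by (rule finite_subset[of _ "Pow {..<m}"]) auto
  have finTT: "finite (TT n a)" for a unfolding TT_def by (rule finite_subset[of _ "Pow {..<n}"]) auto
  have "?\<Omega> \<inter> {F. \<not> rig_connected n F} \<subseteq> (\<Union>A\<in>AA m. \<Union>T\<in>TT n (card A). ?\<Omega> \<inter> EV n A T)"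
    using disc_cover by blast
  then have "card (?\<Omega> \<inter> {F. \<not> rig_connected n F}) \<le> card (\<Union>A\<in>AA m. \<Union>T\<in>TT n (card A). ?\<Omega> \<inter> EV n A T)"
    by (intro card_mono) (auto intro!: finite_UN_I finAA finTT finite_Omega)
  also have "\<dots> \<le> (\<Sum>A\<in>AA m. card (\<Union>T\<in>TT n (card A). ?\<Omega> \<inter> EV n A T))"
    by (rule card_UN_le[OF finAA])
  also have "\<dots> \<le> (\<Sum>A\<in>AA m. \<Sum>T\<in>TT n (card A). card (?\<Omega> \<inter> EV n A T))"
    by (intro sum_mono card_UN_le finTT)
  also have "\<dots> = (\<Sum>A\<in>AA m. \<Sum>T\<in>TT n (card A). (card A choose 2) ^ ((card A + 1) div 2) *
        ((card A choose 2) + ((m - card A) choose 2)) ^ (n - (card A + 1) div 2))"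
    by (intro sum.cong refl) (auto simp: AA_def TT_def card_EV)
  also have "\<dots> = (\<Sum>A\<in>AA m. (n choose ((card A + 1) div 2)) * ((card A choose 2) ^ ((card A + 1) div 2) *
        ((card A choose 2) + ((m - card A) choose 2)) ^ (n - (card A + 1) div 2)))"
  proof (intro sum.cong refl)
    fix A
    have "card (TT n (card A)) = n choose ((card A + 1) div 2)"
      unfolding TT_def using n_subsets[of "{..<n}"] by simp
    then show "(\<Sum>T\<in>TT n (card A). (card A choose 2) ^ ((card A + 1) div 2) *
        ((card A choose 2) + ((m - card A) choose 2)) ^ (n - (card A + 1) div 2)) =
      (n choose ((card A + 1) div 2)) * ((card A choose 2) ^ ((card A + 1) div 2) *
        ((card A choose 2) + ((m - card A) choose 2)) ^ (n - (card A + 1) div 2))" by simp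
  qed
  also have "\<dots> = (\<Sum>a\<in>{2..m div 2}. \<Sum>A\<in>{A \<in> AA m. card A = a}. (n choose ((card A + 1) div 2)) * ((card A choose 2) ^ ((card A + 1) div 2) *
        ((card A choose 2) + ((m - card A) choose 2)) ^ (n - (card A + 1) div 2)))"
    by (rule sum.group[symmetric]) (use finAA in \<open>auto simp: AA_def\<close>)
  also have "\<dots> = (\<Sum>a\<in>{2..m div 2}. (m choose a) * ((n choose ((a + 1) div 2)) *
       ((a choose 2) ^ ((a + 1) div 2) * ((a choose 2) + ((m - a) choose 2)) ^ (n - (a + 1) div 2))))"
  proof (intro sum.cong refl)
    fix a assume a: "a \<in> {2..m div 2}"
    have "{A \<in> AA m. card A = a} = {A. A \<subseteq> {..<m} \<and> card A = a}" using a unfolding AA_def by auto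
    then have "card {A \<in> AA m. card A = a} = m choose a" using n_subsets[of "{..<m}" a] by simp
    moreover have "(\<Sum>A\<in>{A \<in> AA m. card A = a}. (n choose ((card A + 1) div 2)) * ((card A choose 2) ^ ((card A + 1) div 2) *
        ((card A choose 2) + ((m - card A) choose 2)) ^ (n - (card A + 1) div 2))) =
       (\<Sum>A\<in>{A \<in> AA m. card A = a}. (n choose ((a + 1) div 2)) * ((a choose 2) ^ ((a + 1) div 2) *
        ((a choose 2) + ((m - a) choose 2)) ^ (n - (a + 1) div 2)))"
      by (intro sum.cong) auto
    ultimately show "(\<Sum>A\<in>{A \<in> AA m. card A = a}. (n choose ((card A + 1) div 2)) * ((card A choose 2) ^ ((card A + 1) div 2) *
        ((card A choose 2) + ((m - card A) choose 2)) ^ (n - (card A + 1) div 2))) =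
       (m choose a) * ((n choose ((a + 1) div 2)) *
       ((a choose 2) ^ ((a + 1) div 2) * ((a choose 2) + ((m - a) choose 2)) ^ (n - (a + 1) div 2)))" by simp
  qed
  finally show ?thesis .
qed

lemma choose_le_pow_fact: "real (m choose a) \<le> real m ^ a / fact a"
proof (cases "a \<le> m")
  case True
  have "fact a * fact (m - a) * real (m choose a) = fact m"
    using binomial_fact_lemma[OF True] by (metis of_nat_fact of_nat_mult)
  moreover have "real (fact m div fact (m - a)) \<le> real m ^ a"
    using fact_div_fact_le_pow[OF True] by (metis of_nat_le_iff of_nat_power)
  moreover have "fact (m - a) dvd (fact m :: nat)" using True by (simp add: fact_dvd)
  ultimately have "real (m choose a) * fact a \<le> real m ^ a"
    by (smt (verit, ccfv_SIG) fact_gt_zero mult.commute mult.left_commute nonzero_mult_div_cancel_left of_nat_fact real_of_nat_div)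
  then show ?thesis by (simp add: field_simps)
next
  case False then show ?thesis by (simp add: binomial_eq_0)
qed

lemma pow_fact_le_exp: fixes x :: real assumes "0 \<le> x" shows "x ^ k / fact k \<le> exp x"
proof -
  have sm: "summable (\<lambda>j. x ^ j / fact j)"
    using summable_exp[of x] by (simp add: divide_inverse mult.commute)
  have "(\<Sum>j\<in>{k}. x ^ j / fact j) \<le> (\<Sum>j. x ^ j / fact j)"
    using sm assms by (intro sum_le_suminf) auto
  moreover have "(\<Sum>j. x ^ j / fact j) = exp x"
    using exp_converges[of x] by (simp add: sums_iff divide_inverse mult.commute)
  ultimately show ?thesis by simp
qed

lemma kk_fact: "real k ^ k / fact k \<le> exp (real k)"
  by (rule pow_fact_le_exp) simp

lemma alpha_le: assumes "2 \<le> a" "a \<le> m"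
  shows "real (a choose 2) / real (m choose 2) \<le> (real a / real m) ^ 2"
proof -
  have m2: "real m \<ge> 2" using assms by linarith
  have "real a * (real a - 1) * (real m * real m) \<le> real a * real a * (real m * (real m - 1))"
  proof -
    have "(real a - 1) * real m \<le> real a * (real m - 1)" using assms by (simp add: algebra_simps)
    then have "real a * ((real a - 1) * real m) * real m \<le> real a * (real a * (real m - 1)) * real m"
      using assms m2 by (intro mult_right_mono mult_left_mono) auto
    then show ?thesis by (simp add: algebra_simps)
  qed
  then show ?thesis using m2 by (simp add: real_choose_two field_simps power2_eq_square)
qed

lemma beta_eq: assumes "a \<le> m" "2 \<le> m"
  shows "real ((a choose 2) + ((m - a) choose 2)) / real (m choose 2)
         = 1 - 2 * real a * (real m - real a) / (real m * (real m - 1))"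
proof -
  have m2: "real m \<ge> 2" using assms by linarith
  have "real (m - a) = real m - real a" using assms by simp
  then show ?thesis using m2 by (simp add: real_choose_two field_simps)
qed

lemma x_bounds: assumes "a \<le> m" "2 \<le> m"
  shows "2 * real a * (real m - real a) / (real m * (real m - 1)) \<le> 1"
    "2 * real a * (real m - real a) / (real m ^ 2) \<le> 2 * real a * (real m - real a) / (real m * (real m - 1))"
    "0 \<le> 2 * real a * (real m - real a) / (real m * (real m - 1))"
proof -
  have m2: "real m \<ge> 2" using assms by linarith
  have "0 \<le> real ((a choose 2) + ((m - a) choose 2)) / real (m choose 2)" by simp
  then show "2 * real a * (real m - real a) / (real m * (real m - 1)) \<le> 1" unfolding beta_eq[OF assms] by linarith
  show "0 \<le> 2 * real a * (real m - real a) / (real m * (real m - 1))" using assms m2 by simp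
  have "0 \<le> 2 * real a * (real m - real a)" using assms by simp
  moreover have "real m * (real m - 1) \<le> real m ^ 2" using m2 by (simp add: power2_eq_square algebra_simps)
  moreover have "0 < real m * (real m - 1)" using m2 by simp
  ultimately show "2 * real a * (real m - real a) / (real m ^ 2) \<le> 2 * real a * (real m - real a) / (real m * (real m - 1))"
    using assms by (intro divide_left_mono) (auto intro!: mult_pos_pos)
qed

lemma rearr: fixes xa x1 x2 xt xs xE :: real and k p b :: nat
  assumes "xs ^ (2*k) = xs ^ p * xs ^ b" "xa = x1 ^ b" "x2 ^ b = x1 ^ b * x1 ^ b"
  shows "xa * xt ^ p * xs ^ (2*k) * (x1 * xE) ^ b = (xt * xs) ^ p * (x2 * xs * xE) ^ b"
  unfolding assms power_mult_distrib by (simp only: mult_ac)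

lemma term_bound:
  fixes n m a k :: nat and Q :: real
  assumes a2: "2 \<le> a" and am: "2 * a \<le> m" and n1: "1 \<le> n" and kdef: "k = (a + 1) div 2"
    and Qge: "exp 2 * sqrt (2 * exp 1 * real n / real a) * exp (- 2 * (real n / real m) * (1 - real a / real m)) \<le> Q"
    and Q1: "Q \<le> 1"
  shows "real (m choose a) * real (n choose k) * (real (a choose 2) / real (m choose 2)) ^ k *
         (real ((a choose 2) + ((m - a) choose 2)) / real (m choose 2)) ^ (n - k) \<le> 2 * exp 3 * Q ^ (a - 1)"
proof -
  define r where "r = real n / real m"
  define t where "t = real a / real m"
  define s where "s = sqrt (2 * exp 1 * real n / real a)"
  define E1 where "E1 = exp (- 2 * r * (1 - t))"
  define q where "q = exp 2 * s * E1"
  define x where "x = 2 * real a * (real m - real a) / (real m * (real m - 1))"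
  define \<alpha> where "\<alpha> = real (a choose 2) / real (m choose 2)"
  define \<beta> where "\<beta> = real ((a choose 2) + ((m - a) choose 2)) / real (m choose 2)"
  have m4: "real m \<ge> 4" using a2 am by linarith
  have am': "a \<le> m" "2 \<le> m" using a2 am by linarith+
  have q0: "0 \<le> q" unfolding q_def s_def E1_def by simp
  have qQ: "q \<le> Q" using Qge unfolding q_def s_def E1_def r_def t_def by simp
  have Q0: "0 \<le> Q" using q0 qQ by linarith
  have rhs0: "0 \<le> 2 * exp 3 * Q ^ (a - 1)" using Q0 by simp
  show ?thesis
  proof (cases "k \<le> n")
    case False
    then show ?thesis using rhs0 by (simp add: binomial_eq_0)
  next
    case kn: True
    have t2: "t \<le> 1/2" unfolding t_def using am m4 by (simp add: field_simps)
    have r0: "0 \<le> r" unfolding r_def by simp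
    have \<beta>eq: "\<beta> = 1 - x" unfolding \<beta>_def x_def using beta_eq[OF am'] .
    have xb: "x \<le> 1" "0 \<le> x" "2 * real a * (real m - real a) / (real m ^ 2) \<le> x"
      unfolding x_def using x_bounds[OF am'] by auto
    have \<alpha>le: "\<alpha> \<le> t ^ 2" unfolding \<alpha>_def t_def using alpha_le[OF a2 am'(1)] .
    have \<alpha>0: "0 \<le> \<alpha>" unfolding \<alpha>_def by simp
    have ka: "k \<le> a" "a \<le> 2 * k" "2 * k \<le> a + 1" "1 \<le> k" using kdef a2 by auto
    have "\<beta> ^ (n - k) \<le> exp (- x) ^ (n - k)"
      using \<beta>eq xb by (intro power_mono) (auto simp: exp_ge_add_one_self[of "-x", simplified] add.commute)
    also have "\<dots> = exp (- x * real (n - k))" by (simp add: exp_of_nat_mult[symmetric] mult.commute)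
    also have "\<dots> \<le> exp (real a - 2 * real a * r * (1 - t))"
    proof (subst exp_le_cancel_iff)
      have "x * real k \<le> real a" using xb ka by (metis mult_left_le_one_le of_nat_0_le_iff of_nat_le_iff order_trans mult.commute)
      moreover have "2 * real a * r * (1 - t) \<le> x * real n"
      proof -
        have "2 * real a * r * (1 - t) = 2 * real a * (real m - real a) / (real m ^ 2) * real n"
          unfolding r_def t_def using m4 by (simp add: field_simps power2_eq_square)
        also have "\<dots> \<le> x * real n" using xb by (intro mult_right_mono) auto
        finally show ?thesis .
      qed
      moreover have "real (n - k) = real n - real k" using kn by simp
      ultimately show "- x * real (n - k) \<le> real a - 2 * real a * r * (1 - t)" by (simp add: algebra_simps)
    qed
    also have "\<dots> = (exp 1 * E1) ^ a"
      unfolding E1_def by (simp add: exp_of_nat_mult[symmetric] exp_add[symmetric] algebra_simps)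
    finally have expart: "\<beta> ^ (n - k) \<le> (exp 1 * E1) ^ a" .
    have cm: "real (m choose a) \<le> real m ^ a / fact a" by (rule choose_le_pow_fact)
    have cn: "real (n choose k) \<le> real n ^ k / fact k" by (rule choose_le_pow_fact)
    have aa: "real a ^ a / fact a \<le> exp (real a)" by (rule kk_fact)
    have kk: "real k ^ k / fact k \<le> exp (real k)" by (rule kk_fact)
    have nk: "real n ^ k / fact k \<le> s ^ (2 * k)"
    proof -
      have "real n ^ k / fact k = (real n / real k) ^ k * (real k ^ k / fact k)"
        using ka by (simp add: power_divide)
      also have "\<dots> \<le> (real n / real k) ^ k * exp (real k)"
        using kk by (intro mult_left_mono) auto
      also have "\<dots> = (exp 1 * real n / real k) ^ k"
        by (simp add: power_mult_distrib exp_of_nat_mult[symmetric] power_divide)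
      also have "\<dots> \<le> (2 * exp 1 * real n / real a) ^ k"
      proof (intro power_mono)
        have "real a \<le> 2 * real k" using ka by linarith
        then have "real a * (exp 1 * real n) \<le> 2 * real k * (exp 1 * real n)" by (intro mult_right_mono) auto
        then show "exp 1 * real n / real k \<le> 2 * exp 1 * real n / real a" using ka a2 by (simp add: field_simps)
      qed simp
      also have "\<dots> = s ^ (2 * k)" unfolding s_def by (simp add: power_mult)
      finally show ?thesis .
    qed
    have main: "real (m choose a) * real (n choose k) * \<alpha> ^ k \<le> exp (real a) * t ^ (2 * k - a) * s ^ (2 * k)"
    proof -
      have "real (m choose a) * real (n choose k) * \<alpha> ^ k \<le> (real m ^ a / fact a) * (real n ^ k / fact k) * (t ^ 2) ^ k"
        using cm cn \<alpha>le \<alpha>0 by (intro mult_mono power_mono) auto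
      also have "(real m ^ a / fact a) * (t ^ 2) ^ k = (real a ^ a / fact a) * t ^ (2 * k - a)"
      proof -
        have "(t ^ 2) ^ k = t ^ a * t ^ (2 * k - a)" using ka by (simp add: power_mult[symmetric] power_add[symmetric])
        moreover have "real m ^ a * t ^ a = real a ^ a" unfolding t_def using m4 by (simp add: power_divide)
        ultimately show ?thesis by (simp add: field_simps)
      qed
      then have "(real m ^ a / fact a) * (real n ^ k / fact k) * (t ^ 2) ^ k = (real a ^ a / fact a) * t ^ (2 * k - a) * (real n ^ k / fact k)"
        by (simp add: algebra_simps)
      also have "\<dots> \<le> exp (real a) * t ^ (2 * k - a) * s ^ (2 * k)"
        using aa nk t2 unfolding t_def by (intro mult_mono) auto
      finally show ?thesis .
    qed
    have LHS: "real (m choose a) * real (n choose k) * \<alpha> ^ k * \<beta> ^ (n - k) \<le> (t * s) ^ (2 * k - a) * q ^ a"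
    proof -
      have \<beta>0: "0 \<le> \<beta>" unfolding \<beta>_def by simp
      have "real (m choose a) * real (n choose k) * \<alpha> ^ k * \<beta> ^ (n - k) \<le> (exp (real a) * t ^ (2 * k - a) * s ^ (2 * k)) * (exp 1 * E1) ^ a"
      proof (rule mult_mono[OF main expart])
        show "0 \<le> \<beta> ^ (n - k)" using \<beta>0 by simp
        have "0 \<le> t" "0 \<le> s" unfolding t_def s_def by simp_all
        then show "0 \<le> exp (real a) * t ^ (2 * k - a) * s ^ (2 * k)" by (intro mult_nonneg_nonneg zero_le_power) auto
      qed
      also have "\<dots> = (t * s) ^ (2 * k - a) * q ^ a"
      proof -
        have "s ^ (2 * k) = s ^ (2 * k - a) * s ^ a" using ka by (simp add: power_add[symmetric])
        moreover have "exp (real a) = exp 1 ^ a" by (simp add: exp_of_nat_mult[symmetric])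
        moreover have "exp 2 ^ a = exp (1::real) ^ a * exp 1 ^ a"
        proof -
          have e2: "exp (2::real) = exp 1 * exp 1" by (metis exp_add one_add_one)
          show ?thesis by (simp only: e2 power_mult_distrib)
        qed
        ultimately show ?thesis unfolding q_def by (rule rearr)
      qed
      finally show ?thesis .
    qed
    have fin: "(t * s) ^ (2 * k - a) * q ^ a \<le> 2 * exp 3 * Q ^ (a - 1)"
    proof (cases "2 * k = a")
      case True
      have "q ^ a \<le> Q ^ a" using q0 qQ by (intro power_mono) auto
      also have "\<dots> \<le> Q ^ (a - 1)" using Q0 Q1 by (intro power_decreasing) auto
      also have "\<dots> \<le> 2 * exp 3 * Q ^ (a - 1)"
      proof -
        have "1 \<le> 2 * exp (3::real)" using one_le_exp_iff[of "3::real"] by linarith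
        then have "1 * Q ^ (a - 1) \<le> (2 * exp 3) * Q ^ (a - 1)" using Q0 by (intro mult_right_mono) auto
        then show ?thesis by simp
      qed
      finally show ?thesis using True by simp
    next
      case False
      then have p1: "2 * k - a = 1" using ka by linarith
      have "t * s * q = 2 * exp 3 * (r * E1)"
      proof -
        have ss: "s * s = 2 * exp 1 * real n / real a" unfolding s_def by simp
        have e3: "exp 2 * exp 1 = (exp 3 :: real)"
        proof -
          have "exp 2 * exp 1 = exp (2 + 1 :: real)" by (rule exp_add[symmetric])
          also have "(2 + 1 :: real) = 3" by simp
          finally show ?thesis .
        qed
        have "t * s * q = (real a / real m) * (s * s) * exp 2 * E1"
          unfolding q_def t_def by (simp add: mult_ac)
        also have "\<dots> = (real a / real m) * (2 * exp 1 * real n / real a) * exp 2 * E1" using ss by simp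
        also have "\<dots> = 2 * (exp 2 * exp 1) * (real n / real m) * E1" using a2 by (simp add: field_simps)
        also have "\<dots> = 2 * exp 3 * (r * E1)" using e3 unfolding r_def by (simp add: mult_ac)
        finally show ?thesis .
      qed
      also have "\<dots> \<le> 2 * exp 3 * 1"
      proof -
        have "r * 1 \<le> r * (2 * (1 - t))" using t2 r0 by (intro mult_left_mono) auto
        then have "E1 \<le> exp (- r)" unfolding E1_def by (simp add: algebra_simps)
        then have "r * E1 \<le> r * exp (- r)" using r0 by (intro mult_left_mono) auto
        also have "\<dots> \<le> 1"
        proof -
          have "r \<le> exp r" using exp_ge_add_one_self[of r] by linarith
          then show ?thesis by (simp add: exp_minus field_simps)
        qed
        finally show ?thesis by simp
      qed
      finally have tsq: "t * s * q \<le> 2 * exp 3" by simp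
      have "(t * s) ^ (2 * k - a) * q ^ a = (t * s * q) * q ^ (a - 1)"
        using p1 a2 by (simp add: power_eq_if)
      also have "\<dots> \<le> 2 * exp 3 * Q ^ (a - 1)"
      proof (rule mult_mono[OF tsq])
        show "q ^ (a - 1) \<le> Q ^ (a - 1)" using q0 qQ by (intro power_mono) auto
      qed (use q0 in auto)
      finally show ?thesis .
    qed
    show ?thesis using LHS fin unfolding \<alpha>_def \<beta>_def by linarith
  qed
qed

lemma hmax:
  fixes c B y0 y1 y :: real
  assumes "0 < y0" "y0 \<le> y" "y \<le> y1"
  shows "c - ln y / 2 + B * y \<le> max (c - ln y0 / 2 + B * y0) (c - ln y1 / 2 + B * y1)"
proof (cases "y0 = y1")
  case True then show ?thesis using assms by simp
next
  case False
  then have lt: "y0 < y1" using assms by simp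
  define u where "u = (y - y0) / (y1 - y0)"
  have u01: "0 \<le> u" "u \<le> 1" unfolding u_def using assms lt by (auto simp: field_simps)
  have "u * (y1 - y0) = y - y0" unfolding u_def using lt by simp
  then have yeq: "y = (1 - u) * y0 + u * y1" by (simp add: algebra_simps)
  have "(1 - u) * ln y0 + u * ln y1 \<le> ln ((1 - u) *\<^sub>R y0 + u *\<^sub>R y1)"
    using concave_onD[OF ln_concave, of u y0 y1] u01 assms lt by auto
  moreover have "(1 - u) *\<^sub>R y0 + u *\<^sub>R y1 = y" using yeq by simp
  ultimately have lny: "(1 - u) * ln y0 + u * ln y1 \<le> ln y" by simp
  have By: "B * y = (1 - u) * (B * y0) + u * (B * y1)" by (subst yeq) (simp add: algebra_simps)
  have R: "(1 - u) * (c - ln y0 / 2 + B * y0) + u * (c - ln y1 / 2 + B * y1) =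
      c - ((1 - u) * ln y0 + u * ln y1) / 2 + ((1 - u) * (B * y0) + u * (B * y1))"
    by (simp add: field_simps)
  have "c - ln y / 2 + B * y \<le> (1 - u) * (c - ln y0 / 2 + B * y0) + u * (c - ln y1 / 2 + B * y1)"
  proof -
    have "((1 - u) * ln y0 + u * ln y1) / 2 \<le> ln y / 2" using lny by simp
    then show ?thesis unfolding R By by linarith
  qed
  also have "\<dots> \<le> (1 - u) * max (c - ln y0 / 2 + B * y0) (c - ln y1 / 2 + B * y1) + u * max (c - ln y0 / 2 + B * y0) (c - ln y1 / 2 + B * y1)"
    using u01 by (intro add_mono mult_left_mono) auto
  also have "\<dots> = max (c - ln y0 / 2 + B * y0) (c - ln y1 / 2 + B * y1)" by (simp add: algebra_simps)
  finally show ?thesis .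
qed

definition qf :: "nat \<Rightarrow> nat \<Rightarrow> real \<Rightarrow> real" where
  "qf n m y = exp 2 * sqrt (2 * exp 1 * real n / y) * exp (- 2 * (real n / real m) * (1 - y / real m))"

lemma qf_exp: assumes "0 < n" "0 < y"
  shows "qf n m y = exp ((2 + ln (2 * exp 1 * real n) / 2 - 2 * (real n / real m)) - ln y / 2 + (2 * (real n / real m) / real m) * y)"
proof -
  have "sqrt (2 * exp 1 * real n / y) = exp (ln (2 * exp 1 * real n / y) / 2)"
    using assms by (simp add: powr_half_sqrt[symmetric] powr_def)
  also have "ln (2 * exp 1 * real n / y) = ln (2 * exp 1 * real n) - ln y"
    using assms by (simp add: ln_div)
  finally have "sqrt (2 * exp 1 * real n / y) = exp ((ln (2 * exp 1 * real n) - ln y) / 2)" .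
  then show ?thesis unfolding qf_def by (simp add: exp_add[symmetric] algebra_simps diff_divide_distrib)
qed

lemma qf_conv: assumes "0 < n" "2 \<le> y" "y \<le> real m / 2"
  shows "qf n m y \<le> max (qf n m 2) (qf n m (real m / 2))"
proof -
  have p: "y > 0" "real m / 2 > 0" "(2::real) > 0" using assms by auto
  define c where "c = 2 + ln (2 * exp 1 * real n) / 2 - 2 * (real n / real m)"
  define B where "B = 2 * (real n / real m) / real m"
  have "c - ln y / 2 + B * y \<le> max (c - ln 2 / 2 + B * 2) (c - ln (real m / 2) / 2 + B * (real m / 2))"
    using assms by (intro hmax) auto
  then have "exp (c - ln y / 2 + B * y) \<le> max (exp (c - ln 2 / 2 + B * 2)) (exp (c - ln (real m / 2) / 2 + B * (real m / 2)))"
    by (auto simp: max_def split: if_splits)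
  then show ?thesis unfolding qf_exp[OF assms(1) p(1)] qf_exp[OF assms(1) p(2)] qf_exp[OF assms(1) p(3)] c_def B_def .
qed

lemma geo_aux: fixes Q :: real assumes "0 \<le> Q" "Q \<le> 1/2" "1 \<le> M"
  shows "(\<Sum>a\<in>{2..M}. Q ^ (a - 1)) \<le> 2 * Q - 2 * Q ^ M"
  using assms(3)
proof (induction M rule: dec_induct)
  case base then show ?case by simp
next
  case (step M)
  have "{2..Suc M} = insert (Suc M) {2..M}" using step by auto
  then have "(\<Sum>a\<in>{2..Suc M}. Q ^ (a - 1)) = Q ^ M + (\<Sum>a\<in>{2..M}. Q ^ (a - 1))" by simp
  also have "\<dots> \<le> Q ^ M + (2 * Q - 2 * Q ^ M)" using step by simp
  also have "\<dots> \<le> 2 * Q - 2 * Q ^ Suc M"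
  proof -
    have "(2 * Q) * Q ^ M \<le> 1 * Q ^ M" using assms by (intro mult_right_mono) auto
    then have "2 * Q ^ Suc M \<le> Q ^ M" by (simp add: mult.assoc)
    then show ?thesis by simp
  qed
  finally show ?case .
qed

lemma geo: fixes Q :: real assumes "0 \<le> Q" "Q \<le> 1/2"
  shows "(\<Sum>a\<in>{2..M}. Q ^ (a - 1)) \<le> 2 * Q"
proof (cases "1 \<le> M")
  case True
  have "0 \<le> Q ^ M" using assms by simp
  then show ?thesis using geo_aux[OF assms True] by linarith
next
  case False then have "{2..M} = {}" by auto
  then show ?thesis using assms by simp
qed

lemma disc_prob:
  assumes m: "2 \<le> m" and n: "1 \<le> n" and Qdef: "\<And>y. 2 \<le> y \<Longrightarrow> y \<le> real m / 2 \<Longrightarrow> qf n m y \<le> Q"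
    and Q0: "0 \<le> Q" and Qh: "Q \<le> 1/2"
  shows "measure_pmf.prob (RIG n m 2) {F. \<not> rig_connected n F} \<le> 4 * exp 3 * Q"
proof -
  let ?\<Omega> = "colour_assignments n m 2"
  let ?N = "real (m choose 2)"
  define k where "k = (\<lambda>a::nat. (a + 1) div 2)"
  have N0: "?N > 0" using m by (simp add: zero_less_binomial_iff)
  have "measure_pmf.prob (RIG n m 2) {F. \<not> rig_connected n F} = card (?\<Omega> \<inter> {F. \<not> rig_connected n F}) / ?N ^ n"
    using prob_RIG[OF m] card_Omega by simp
  also have "\<dots> \<le> real (\<Sum>a\<in>{2..m div 2}. (m choose a) * ((n choose k a) *
       ((a choose 2) ^ k a * ((a choose 2) + ((m - a) choose 2)) ^ (n - k a)))) / ?N ^ n"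
  proof (rule divide_right_mono)
    show "real (card (?\<Omega> \<inter> {F. \<not> rig_connected n F})) \<le> real (\<Sum>a\<in>{2..m div 2}. (m choose a) * ((n choose k a) *
       ((a choose 2) ^ k a * ((a choose 2) + ((m - a) choose 2)) ^ (n - k a))))"
      unfolding of_nat_le_iff k_def by (rule disc_count[OF m])
  qed (use N0 in simp)
  also have "\<dots> = (\<Sum>a\<in>{2..m div 2}. real (m choose a) * real (n choose k a) * (real (a choose 2) / ?N) ^ k a *
         (real ((a choose 2) + ((m - a) choose 2)) / ?N) ^ (n - k a))"
    unfolding of_nat_sum sum_divide_distrib
  proof (intro sum.cong refl)
    fix a
    show "real ((m choose a) * ((n choose k a) * ((a choose 2) ^ k a * ((a choose 2) + ((m - a) choose 2)) ^ (n - k a)))) / ?N ^ n =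
      real (m choose a) * real (n choose k a) * (real (a choose 2) / ?N) ^ k a * (real ((a choose 2) + ((m - a) choose 2)) / ?N) ^ (n - k a)"
    proof (cases "k a \<le> n")
      case True
      then have "?N ^ n = ?N ^ k a * ?N ^ (n - k a)" by (simp add: power_add[symmetric])
      then show ?thesis using N0 by (simp add: power_divide)
    next
      case False then show ?thesis by (simp add: binomial_eq_0)
    qed
  qed
  also have "\<dots> \<le> (\<Sum>a\<in>{2..m div 2}. 2 * exp 3 * Q ^ (a - 1))"
  proof (intro sum_mono)
    fix a assume a: "a \<in> {2..m div 2}"
    have "2 * a \<le> m" using a by auto
    then have "real a \<le> real m / 2" by linarith
    moreover have "0 < n" "2 \<le> real a" using a n by auto
    ultimately have qa: "qf n m (real a) \<le> Q" by (intro Qdef)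
    show "real (m choose a) * real (n choose k a) * (real (a choose 2) / ?N) ^ k a *
         (real ((a choose 2) + ((m - a) choose 2)) / ?N) ^ (n - k a) \<le> 2 * exp 3 * Q ^ (a - 1)"
    proof (rule term_bound)
      show "2 \<le> a" "2 * a \<le> m" using a by auto
      show "1 \<le> n" "k a = (a + 1) div 2" "Q \<le> 1" using n Qh unfolding k_def by auto
      show "exp 2 * sqrt (2 * exp 1 * real n / real a) * exp (- 2 * (real n / real m) * (1 - real a / real m)) \<le> Q"
        using qa unfolding qf_def .
    qed
  qed
  also have "\<dots> = 2 * exp 3 * (\<Sum>a\<in>{2..m div 2}. Q ^ (a - 1))" by (simp add: sum_distrib_left)
  also have "\<dots> \<le> 2 * exp 3 * (2 * Q)" using geo[OF Q0 Qh] by (intro mult_left_mono) auto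
  finally show ?thesis by simp
qed

lemma qf2_eq: assumes "0 < n"
  shows "qf n m 2 = exp (5/2 + 4 * (real n / real m) / real m - (4 * (real n / real m) - ln (real n)) / 2)"
proof -
  have "qf n m 2 = exp ((2 + ln (2 * exp 1 * real n) / 2 - 2 * (real n / real m)) - ln 2 / 2 + (2 * (real n / real m) / real m) * 2)"
    using qf_exp[OF assms, of 2 m] by simp
  also have "ln (2 * exp 1 * real n) = ln 2 + 1 + ln (real n)" using assms by (simp add: ln_mult)
  finally show ?thesis by (simp add: field_simps)
qed

lemma qfm_eq: assumes "0 < m"
  shows "qf n m (real m / 2) = exp 2 * sqrt (4 * exp 1 * (real n / real m)) * exp (- (real n / real m))"
  unfolding qf_def using assms by (simp add: field_simps)

lemma key_ineq:
  fixes n m :: nat and D r :: real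
  assumes m4: "4 \<le> m" and n2: "2 \<le> n" and r: "r = real n / real m" and D: "D = 4 * r - ln (real n)"
    and D0: "0 \<le> D" and big: "4 * (ln (real n))^2 \<le> real n"
  shows "4 * r / real m - D / 2 \<le> 1 - D / 6"
proof (cases "ln (real n) \<le> r")
  case True
  have "r * 4 \<le> r * real m" using m4 r by (intro mult_left_mono) auto
  then have "4 * r / real m \<le> r" using m4 by (simp add: field_simps)
  moreover have "r \<le> D / 3" using True D by simp
  ultimately show ?thesis by linarith
next
  case False
  have ln0: "0 < ln (real n)" using n2 by simp
  have m0: "0 < real m" using m4 by simp
  have "real n < ln (real n) * real m" using False r m0 by (simp add: field_simps)
  then have "real n * real n < (ln (real n) * real m) * (ln (real n) * real m)"
    using n2 by (intro mult_strict_mono) auto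
  then have "4 * real n * real n < 4 * (ln (real n))^2 * (real m * real m)"
    by (simp add: power2_eq_square algebra_simps)
  also have "\<dots> \<le> real n * (real m * real m)" using big by (intro mult_right_mono) auto
  finally have "4 * real n < real m * real m" using n2 by simp
  then have "4 * real n / (real m * real m) < 1" using m0 by (simp add: field_simps)
  moreover have "4 * r / real m = 4 * real n / (real m * real m)" using r by simp
  ultimately have "4 * r / real m < 1" by simp
  then show ?thesis using D0 by linarith
qed

lemma prob_compl_conn: "measure_pmf.prob p {F. P F} = 1 - measure_pmf.prob p {F. \<not> P F}"
proof -
  have "measure_pmf.prob p (space (measure_pmf p) - {F. \<not> P F}) = 1 - measure_pmf.prob p {F. \<not> P F}"
    by (rule measure_pmf.prob_compl) simp
  moreover have "space (measure_pmf p) - {F. \<not> P F} = {F. P F}" by auto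
  ultimately show ?thesis by simp
qed

lemma part1:
  fixes m :: "nat \<Rightarrow> nat"
  assumes m2: "\<forall>n. 2 \<le> m n"
    and H: "filterlim (\<lambda>n. 4 * real n / real (m n) - ln (real n)) at_top sequentially"
  shows "(\<lambda>n. measure_pmf.prob (RIG n (m n) 2) {F. rig_connected n F}) \<longlonglongrightarrow> 1"
proof -
  define D where "D = (\<lambda>n. 4 * real n / real (m n) - ln (real n))"
  define r where "r = (\<lambda>n. real n / real (m n))"
  define Q where "Q = (\<lambda>n. if m n < 4 then 0 else max (qf n (m n) 2) (qf n (m n) (real (m n) / 2)))"
  define B1 where "B1 = (\<lambda>n. exp (7/2 - D n / 6))"
  define g where "g = (\<lambda>x::real. exp 2 * sqrt (4 * exp 1 * x) * exp (- x))"
  have HD: "filterlim D at_top sequentially" using H unfolding D_def .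
  have evD: "eventually (\<lambda>n. 0 \<le> D n) sequentially" using HD by (simp add: filterlim_at_top)
  have evbig: "eventually (\<lambda>n::nat. 4 * (ln (real n))^2 \<le> real n) sequentially" by real_asymp
  have ev2: "eventually (\<lambda>n::nat. 2 \<le> n) sequentially" by (rule eventually_ge_at_top)
  have B1lim: "B1 \<longlonglongrightarrow> 0"
  proof -
    have "((\<lambda>x::real. exp (7/2 - x / 6)) \<longlongrightarrow> 0) at_top" by real_asymp
    from filterlim_compose[OF this HD] show ?thesis unfolding B1_def by (simp add: o_def)
  qed
  have rlim: "filterlim r at_top sequentially"
  proof (rule filterlim_at_top_mono)
    show "filterlim (\<lambda>n::nat. ln (real n) / 4) at_top sequentially" by real_asymp
    show "eventually (\<lambda>n. ln (real n) / 4 \<le> r n) sequentially"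
      using evD by eventually_elim (simp add: D_def r_def mult.commute)
  qed
  have B2lim: "(\<lambda>n. g (r n)) \<longlonglongrightarrow> 0"
  proof -
    have "(g \<longlongrightarrow> 0) at_top" unfolding g_def by real_asymp
    from filterlim_compose[OF this rlim] show ?thesis by (simp add: o_def)
  qed
  have Qbound: "eventually (\<lambda>n. Q n \<le> max (B1 n) (g (r n))) sequentially"
    using evD evbig ev2
  proof eventually_elim
    case (elim n)
    show ?case
    proof (cases "m n < 4")
      case True then show ?thesis unfolding Q_def B1_def by (simp add: le_max_iff_disj)
    next
      case False
      have n0: "0 < n" using elim by simp
      have m0: "0 < m n" using False by simp
      have "4 * r n / real (m n) - D n / 2 \<le> 1 - D n / 6"
        using key_ineq[of "m n" n "r n" "D n"] False elim unfolding r_def D_def by (simp add: mult.assoc)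
      then have "qf n (m n) 2 \<le> B1 n" unfolding qf2_eq[OF n0] B1_def r_def D_def
        by (simp add: algebra_simps mult.assoc)
      moreover have "qf n (m n) (real (m n) / 2) = g (r n)" unfolding qfm_eq[OF m0] g_def r_def ..
      ultimately show ?thesis using False unfolding Q_def by (auto simp: le_max_iff_disj)
    qed
  qed
  have Q0: "\<And>n. 0 \<le> Q n" unfolding Q_def qf_def by (auto simp: le_max_iff_disj)
  have Qlim: "Q \<longlonglongrightarrow> 0"
  proof (rule tendsto_sandwich[of "\<lambda>_. 0" _ _ "\<lambda>n. max (B1 n) (g (r n))"])
    show "eventually (\<lambda>n. 0 \<le> Q n) sequentially" using Q0 by simp
    show "eventually (\<lambda>n. Q n \<le> max (B1 n) (g (r n))) sequentially" by (rule Qbound)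
    show "(\<lambda>n. max (B1 n) (g (r n))) \<longlonglongrightarrow> 0" using tendsto_max[OF B1lim B2lim] by simp
  qed simp
  have evQ: "eventually (\<lambda>n. Q n \<le> 1/2) sequentially"
  proof -
    have "eventually (\<lambda>n. Q n < 1/2) sequentially" using order_tendstoD(2)[OF Qlim, of "1/2"] by simp
    then show ?thesis by eventually_elim simp
  qed
  have Pbound: "eventually (\<lambda>n. measure_pmf.prob (RIG n (m n) 2) {F. \<not> rig_connected n F} \<le> 4 * exp 3 * Q n) sequentially"
    using evQ ev2
  proof eventually_elim
    case (elim n)
    show ?case
    proof (rule disc_prob)
      show "2 \<le> m n" using m2 by simp
      show "1 \<le> n" using elim by simp
      show "0 \<le> Q n" by (rule Q0)
      show "Q n \<le> 1/2" using elim by simp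
      fix y :: real assume y: "2 \<le> y" "y \<le> real (m n) / 2"
      then have "\<not> m n < 4" by linarith
      moreover have "0 < n" using elim by simp
      ultimately show "qf n (m n) y \<le> Q n" using qf_conv[of n y "m n"] y unfolding Q_def by simp
    qed
  qed
  have Pdisc: "(\<lambda>n. measure_pmf.prob (RIG n (m n) 2) {F. \<not> rig_connected n F}) \<longlonglongrightarrow> 0"
  proof (rule tendsto_sandwich[of "\<lambda>_. 0" _ _ "\<lambda>n. 4 * exp 3 * Q n"])
    show "(\<lambda>n. 4 * exp 3 * Q n) \<longlonglongrightarrow> 0" using tendsto_mult_right_zero[OF Qlim, of "4 * exp 3"] by simp
  qed (use Pbound in auto)
  have "(\<lambda>n. 1 - measure_pmf.prob (RIG n (m n) 2) {F. \<not> rig_connected n F}) \<longlonglongrightarrow> 1 - 0"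
    by (intro tendsto_diff tendsto_const Pdisc)
  then show ?thesis by (subst prob_compl_conn) simp
qed

definition iso :: "nat \<Rightarrow> (nat \<Rightarrow> nat set) \<Rightarrow> nat \<Rightarrow> bool" where
  "iso n F v \<longleftrightarrow> (\<forall>w<n. w \<noteq> v \<longrightarrow> F w \<inter> F v = {})"

lemma iso_disc:
  assumes n: "2 \<le> n" and v: "v < n" and I: "iso n F v"
  shows "\<not> rig_connected n F"
proof
  assume c: "rig_connected n F"
  define w where "w = (if v = 0 then 1 else 0 :: nat)"
  have w: "w < n" "w \<noteq> v" unfolding w_def using n by auto
  have "(v, w) \<in> (rig_edges n F)\<^sup>*" using c v w unfolding rig_connected_def graph_connected_def by auto
  then show False
  proof (cases rule: converse_rtranclE)
    case base then show False using w by simp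
  next
    case (step y)
    then have "y < n" "v \<noteq> y" "F v \<inter> F y \<noteq> {}" unfolding rig_edges_def by auto
    then show False using I unfolding iso_def by blast
  qed
qed

lemma card_Kc_single: "T \<in> Kc m \<Longrightarrow> card (Kc m \<inter> {T}) = 1" by auto

lemma card_iso:
  assumes v: "v < n"
  shows "card (colour_assignments n m 2 \<inter> {F. iso n F v}) = (m choose 2) * ((m - 2) choose 2) ^ (n - 1)"
proof -
  let ?\<Omega> = "colour_assignments n m 2"
  define Y :: "nat set \<Rightarrow> nat \<Rightarrow> nat set set" where "Y = (\<lambda>T w. if w = v then {T} else {S. S \<inter> T = {}})"
  have eq: "?\<Omega> \<inter> {F. iso n F v} = (\<Union>T\<in>Kc m. ?\<Omega> \<inter> {F. \<forall>w<n. F w \<in> Y T w})"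
  proof (intro equalityI subsetI)
    fix F assume F: "F \<in> ?\<Omega> \<inter> {F. iso n F v}"
    have "F v \<in> Kc m" using Omega_D[of F n m v] F v unfolding Kc_def by auto
    moreover have "F \<in> ?\<Omega> \<inter> {F. \<forall>w<n. F w \<in> Y (F v) w}" using F unfolding Y_def iso_def by auto
    ultimately show "F \<in> (\<Union>T\<in>Kc m. ?\<Omega> \<inter> {F. \<forall>w<n. F w \<in> Y T w})" by blast
  next
    fix F assume "F \<in> (\<Union>T\<in>Kc m. ?\<Omega> \<inter> {F. \<forall>w<n. F w \<in> Y T w})"
    then obtain T where T: "T \<in> Kc m" "F \<in> ?\<Omega>" "\<forall>w<n. F w \<in> Y T w" by blast
    have Fv: "F v = T" using T(3) v unfolding Y_def by auto
    have "\<forall>w<n. w \<noteq> v \<longrightarrow> F w \<inter> F v = {}"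
    proof (intro allI impI)
      fix w assume "w < n" "w \<noteq> v"
      then have "F w \<in> Y T w" using T(3) by blast
      then have "F w \<in> {S. S \<inter> T = {}}" using \<open>w \<noteq> v\<close> unfolding Y_def by simp
      then show "F w \<inter> F v = {}" using Fv by simp
    qed
    then show "F \<in> ?\<Omega> \<inter> {F. iso n F v}" using T unfolding iso_def by auto
  qed
  have cardT: "card (?\<Omega> \<inter> {F. \<forall>w<n. F w \<in> Y T w}) = ((m - 2) choose 2) ^ (n - 1)" if T: "T \<in> Kc m" for T
  proof -
    have Tm: "T \<subseteq> {..<m}" "card T = 2" using T unfolding Kc_def by auto
    have "card (?\<Omega> \<inter> {F. \<forall>w<n. F w \<in> Y T w}) = (\<Prod>w<n. card (Kc m \<inter> Y T w))" by (rule card_prod_event)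
    also have "\<dots> = card (Kc m \<inter> Y T v) * (\<Prod>w\<in>{..<n} - {v}. card (Kc m \<inter> Y T w))"
      using v by (subst prod.remove[of _ v]) auto
    also have "\<dots> = (\<Prod>w\<in>{..<n} - {v}. (m - 2) choose 2)"
    proof -
      have "card (Kc m \<inter> Y T v) = 1" using T unfolding Y_def by auto
      moreover have "(\<Prod>w\<in>{..<n} - {v}. card (Kc m \<inter> Y T w)) = (\<Prod>w\<in>{..<n} - {v}. (m - 2) choose 2)"
        using card_Kc_disj[OF Tm(1)] Tm(2) by (intro prod.cong) (auto simp: Y_def)
      ultimately show ?thesis by simp
    qed
    also have "\<dots> = ((m - 2) choose 2) ^ (n - 1)" using v by simp
    finally show ?thesis .
  qed
  have "card (?\<Omega> \<inter> {F. iso n F v}) = (\<Sum>T\<in>Kc m. card (?\<Omega> \<inter> {F. \<forall>w<n. F w \<in> Y T w}))"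
    unfolding eq
  proof (rule card_UN_disjoint)
    show "finite (Kc m)" by (rule finite_Kc)
    show "\<forall>T\<in>Kc m. finite (?\<Omega> \<inter> {F. \<forall>w<n. F w \<in> Y T w})" using finite_Omega by auto
    show "\<forall>T1\<in>Kc m. \<forall>T2\<in>Kc m. T1 \<noteq> T2 \<longrightarrow> (?\<Omega> \<inter> {F. \<forall>w<n. F w \<in> Y T1 w}) \<inter> (?\<Omega> \<inter> {F. \<forall>w<n. F w \<in> Y T2 w}) = {}"
      using v unfolding Y_def by auto
  qed
  also have "\<dots> = (\<Sum>T\<in>Kc m. ((m - 2) choose 2) ^ (n - 1))" by (intro sum.cong refl cardT)
  also have "\<dots> = (m choose 2) * ((m - 2) choose 2) ^ (n - 1)" by (simp add: card_Kc)
  finally show ?thesis .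
qed

lemma card_iso2:
  assumes u: "u < n" and v: "v < n" and uv: "u \<noteq> v"
  shows "card (colour_assignments n m 2 \<inter> {F. iso n F u \<and> iso n F v}) =
    (m choose 2) * ((m - 2) choose 2) * ((m - 4) choose 2) ^ (n - 2)"
proof -
  let ?\<Omega> = "colour_assignments n m 2"
  define P where "P = Sigma (Kc m) (\<lambda>T1. Kc m \<inter> {S. S \<inter> T1 = {}})"
  define Z :: "nat set \<times> nat set \<Rightarrow> nat \<Rightarrow> nat set set" where
    "Z = (\<lambda>TT w. if w = u then {fst TT} else if w = v then {snd TT} else {S. S \<inter> (fst TT \<union> snd TT) = {}})"
  have eq: "?\<Omega> \<inter> {F. iso n F u \<and> iso n F v} = (\<Union>TT\<in>P. ?\<Omega> \<inter> {F. \<forall>w<n. F w \<in> Z TT w})"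
  proof (intro equalityI subsetI)
    fix F assume F: "F \<in> ?\<Omega> \<inter> {F. iso n F u \<and> iso n F v}"
    have "F u \<in> Kc m" "F v \<in> Kc m" using Omega_D[of F n m] F u v unfolding Kc_def by auto
    moreover have "F v \<inter> F u = {}" using F uv v unfolding iso_def by auto
    ultimately have "(F u, F v) \<in> P" unfolding P_def by auto
    moreover have "\<forall>w<n. F w \<in> Z (F u, F v) w"
    proof (intro allI impI)
      fix w assume w: "w < n"
      show "F w \<in> Z (F u, F v) w"
      proof (cases "w = u \<or> w = v")
        case True then show ?thesis unfolding Z_def using uv by auto
      next
        case False
        then have "F w \<inter> F u = {}" "F w \<inter> F v = {}" using F w unfolding iso_def by auto
        then show ?thesis unfolding Z_def using False by auto
      qed
    qed
    ultimately show "F \<in> (\<Union>TT\<in>P. ?\<Omega> \<inter> {F. \<forall>w<n. F w \<in> Z TT w})" using F by blast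
  next
    fix F assume "F \<in> (\<Union>TT\<in>P. ?\<Omega> \<inter> {F. \<forall>w<n. F w \<in> Z TT w})"
    then obtain TT where TT: "TT \<in> P" "F \<in> ?\<Omega>" "\<forall>w<n. F w \<in> Z TT w" by blast
    obtain T1 T2 where "TT = (T1, T2)" by (cases TT)
    then have T: "(T1, T2) \<in> P" "F \<in> ?\<Omega>" "\<forall>w<n. F w \<in> Z (T1, T2) w" using TT by auto
    have Fu: "F u = T1" using T(3) u unfolding Z_def by auto
    have Fv: "F v = T2" using T(3) v uv unfolding Z_def by auto
    have d: "T2 \<inter> T1 = {}" using T(1) unfolding P_def by auto
    have oth: "F w \<inter> (T1 \<union> T2) = {}" if "w < n" "w \<noteq> u" "w \<noteq> v" for w
    proof -
      have "F w \<in> Z (T1, T2) w" using T(3) that(1) by blast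
      then show ?thesis using that unfolding Z_def by simp
    qed
    have "iso n F u" unfolding iso_def
    proof (intro allI impI)
      fix w assume "w < n" "w \<noteq> u"
      then show "F w \<inter> F u = {}" using oth[of w] Fu Fv d by (cases "w = v") auto
    qed
    moreover have "iso n F v" unfolding iso_def
    proof (intro allI impI)
      fix w assume "w < n" "w \<noteq> v"
      then show "F w \<inter> F v = {}" using oth[of w] Fu Fv d by (cases "w = u") auto
    qed
    ultimately show "F \<in> ?\<Omega> \<inter> {F. iso n F u \<and> iso n F v}" using T by auto
  qed
  have cardT: "card (?\<Omega> \<inter> {F. \<forall>w<n. F w \<in> Z TT w}) = ((m - 4) choose 2) ^ (n - 2)" if TT: "TT \<in> P" for TT
  proof -
    obtain T1 T2 where TT': "TT = (T1, T2)" by (cases TT)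
    have T12: "T1 \<in> Kc m" "T2 \<in> Kc m" "T2 \<inter> T1 = {}" using TT TT' unfolding P_def by auto
    have U: "T1 \<union> T2 \<subseteq> {..<m}" "card (T1 \<union> T2) = 4"
      using T12 unfolding Kc_def by (auto simp: card_Un_disjoint finite_subset Int_commute)
    have "card (?\<Omega> \<inter> {F. \<forall>w<n. F w \<in> Z TT w}) = (\<Prod>w<n. card (Kc m \<inter> Z TT w))" by (rule card_prod_event)
    also have "\<dots> = card (Kc m \<inter> Z TT u) * (\<Prod>w\<in>{..<n} - {u}. card (Kc m \<inter> Z TT w))"
      using u by (subst prod.remove[of _ u]) auto
    also have "(\<Prod>w\<in>{..<n} - {u}. card (Kc m \<inter> Z TT w)) = card (Kc m \<inter> Z TT v) * (\<Prod>w\<in>{..<n} - {u} - {v}. card (Kc m \<inter> Z TT w))"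
      using v uv by (subst prod.remove[of _ v]) auto
    also have "card (Kc m \<inter> Z TT u) = 1" using T12 TT' unfolding Z_def by auto
    also have "card (Kc m \<inter> Z TT v) = 1" using T12 TT' uv unfolding Z_def by auto
    also have "(\<Prod>w\<in>{..<n} - {u} - {v}. card (Kc m \<inter> Z TT w)) = (\<Prod>w\<in>{..<n} - {u} - {v}. (m - 4) choose 2)"
      using card_Kc_disj[OF U(1)] U(2) TT' by (intro prod.cong) (auto simp: Z_def)
    also have "\<dots> = ((m - 4) choose 2) ^ (n - 2)"
    proof -
      have "card ({..<n} - {u} - {v}) = n - 2" using u v uv by (simp add: card_Diff_subset)
      then show ?thesis by simp
    qed
    finally show ?thesis by simp
  qed
  have finP: "finite P" unfolding P_def using finite_Kc by auto
  have cardP: "card P = (m choose 2) * ((m - 2) choose 2)"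
  proof -
    have "card P = (\<Sum>T1\<in>Kc m. card (Kc m \<inter> {S. S \<inter> T1 = {}}))" unfolding P_def
      by (rule card_SigmaI) (use finite_Kc in auto)
    also have "\<dots> = (\<Sum>T1\<in>Kc m. (m - 2) choose 2)"
    proof (intro sum.cong refl)
      fix T1 assume "T1 \<in> Kc m"
      then have "T1 \<subseteq> {..<m}" "card T1 = 2" unfolding Kc_def by auto
      then show "card (Kc m \<inter> {S. S \<inter> T1 = {}}) = (m - 2) choose 2" using card_Kc_disj by metis
    qed
    finally show ?thesis by (simp add: card_Kc)
  qed
  have "card (?\<Omega> \<inter> {F. iso n F u \<and> iso n F v}) = (\<Sum>TT\<in>P. card (?\<Omega> \<inter> {F. \<forall>w<n. F w \<in> Z TT w}))"
    unfolding eq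
  proof (rule card_UN_disjoint[OF finP])
    show "\<forall>TT\<in>P. finite (?\<Omega> \<inter> {F. \<forall>w<n. F w \<in> Z TT w})" using finite_Omega by auto
    show "\<forall>A\<in>P. \<forall>B\<in>P. A \<noteq> B \<longrightarrow> (?\<Omega> \<inter> {F. \<forall>w<n. F w \<in> Z A w}) \<inter> (?\<Omega> \<inter> {F. \<forall>w<n. F w \<in> Z B w}) = {}"
    proof (intro ballI impI)
      fix A B assume "A \<in> P" "B \<in> P" "A \<noteq> B"
      show "(?\<Omega> \<inter> {F. \<forall>w<n. F w \<in> Z A w}) \<inter> (?\<Omega> \<inter> {F. \<forall>w<n. F w \<in> Z B w}) = {}"
      proof (rule ccontr)
        assume "\<not> ?thesis"
        then obtain F where F: "\<forall>w<n. F w \<in> Z A w" "\<forall>w<n. F w \<in> Z B w" by blast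
        have "F u = fst A" "F u = fst B" using F u unfolding Z_def by auto
        moreover have "F v = snd A" "F v = snd B" using F v uv unfolding Z_def by auto
        ultimately show False using \<open>A \<noteq> B\<close> by (metis prod.expand)
      qed
    qed
  qed
  also have "\<dots> = (\<Sum>TT\<in>P. ((m - 4) choose 2) ^ (n - 2))" by (intro sum.cong refl cardT)
  also have "\<dots> = (m choose 2) * ((m - 2) choose 2) * ((m - 4) choose 2) ^ (n - 2)" by (simp add: cardP)
  finally show ?thesis .
qed

lemma cheb:
  fixes X :: "'a \<Rightarrow> real"
  assumes fin: "finite \<Omega>"
  shows "real (card {F\<in>\<Omega>. X F = 0}) * (\<Sum>F\<in>\<Omega>. X F)^2 \<le>
           real (card \<Omega>) * (real (card \<Omega>) * (\<Sum>F\<in>\<Omega>. (X F)^2) - (\<Sum>F\<in>\<Omega>. X F)^2)"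
proof -
  define c where "c = real (card \<Omega>)"
  define S1 where "S1 = (\<Sum>F\<in>\<Omega>. X F)"
  define S2 where "S2 = (\<Sum>F\<in>\<Omega>. (X F)^2)"
  have "real (card {F\<in>\<Omega>. X F = 0}) * S1^2 = (\<Sum>F\<in>{F\<in>\<Omega>. X F = 0}. (c * X F - S1)^2)"
    by simp
  also have "\<dots> \<le> (\<Sum>F\<in>\<Omega>. (c * X F - S1)^2)"
    using fin by (intro sum_mono2) auto
  also have "\<dots> = (\<Sum>F\<in>\<Omega>. c^2 * (X F)^2 - 2 * c * S1 * X F + S1^2)"
    by (intro sum.cong refl) (simp add: power2_eq_square algebra_simps)
  also have "\<dots> = c^2 * S2 - 2 * c * S1 * S1 + c * S1^2"
    unfolding S2_def c_def
    by (simp add: sum.distrib sum_subtractf sum_distrib_left S1_def)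
  also have "\<dots> = c * (c * S2 - S1^2)" by (simp add: power2_eq_square algebra_simps)
  finally show ?thesis unfolding c_def S1_def S2_def .
qed

lemma alg2:
  fixes N b d :: real and j :: nat
  assumes N: "0 < N" and b: "0 < b" and d: "0 \<le> d" and Nd: "N * d \<le> b^2"
  shows "N ^ (j + 2) * (real (j + 2) * N * b ^ (j + 1) + real (j + 2) * real (j + 1) * N * b * d ^ j) /
           (real (j + 2) * N * b ^ (j + 1))^2 \<le> N ^ (j + 1) / (real (j + 2) * b ^ (j + 1)) + N / b"
proof -
  define J where "J = real (j + 2)"
  have J: "J > 0" unfolding J_def by simp
  have split: "N ^ (j + 2) * (J * N * b ^ (j + 1) + J * real (j + 1) * N * b * d ^ j) / (J * N * b ^ (j + 1))^2 =
     N ^ (j + 1) / (J * b ^ (j + 1)) + (real (j + 1) / J) * ((N / b) * ((N * d) / b^2) ^ j)"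
    using N b J by (simp add: field_simps power2_eq_square power_mult_distrib power_add)
  have "(N * d) / b^2 \<le> 1" using Nd b by simp
  moreover have "0 \<le> (N * d) / b^2" using N d by simp
  ultimately have "((N * d) / b^2) ^ j \<le> 1" by (simp add: power_le_one)
  then have "(N / b) * ((N * d) / b^2) ^ j \<le> (N / b) * 1" using N b by (intro mult_left_mono) auto
  then have "(N / b) * ((N * d) / b^2) ^ j \<le> N / b" by simp
  moreover have "real (j + 1) / J \<le> 1" "0 \<le> real (j + 1) / J" unfolding J_def by auto
  moreover have "0 \<le> (N / b) * ((N * d) / b^2) ^ j" using N b d by simp
  ultimately have "(real (j + 1) / J) * ((N / b) * ((N * d) / b^2) ^ j) \<le> N / b"
    by (meson mult_le_one order_trans mult_left_le_one_le)
  then show ?thesis using split unfolding J_def by linarith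
qed

lemma Nd_le: assumes "4 \<le> m"
  shows "real (m choose 2) * real ((m - 4) choose 2) \<le> (real ((m - 2) choose 2))^2"
proof -
  have e1: "real (m - 4) = real m - 4" "real (m - 2) = real m - 2" using assms by auto
  define x where "x = real m * real m - 5 * real m"
  have x: "x \<ge> -4"
  proof -
    have "(real m - 4) * (real m - 1) \<ge> 0" using assms by simp
    then show ?thesis unfolding x_def by (simp add: algebra_simps)
  qed
  have "real (m choose 2) * real ((m - 4) choose 2) = x * (x + 4) / 4"
    unfolding real_choose_two e1 x_def by (simp add: field_simps)
  also have "\<dots> \<le> (x + 6)^2 / 4" using x by (simp add: power2_eq_square algebra_simps)
  also have "(x + 6)^2 / 4 = (real ((m - 2) choose 2))^2"
    unfolding real_choose_two e1 x_def by (simp add: field_simps power2_eq_square)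
  finally show ?thesis .
qed

lemma sum_ind: "finite A \<Longrightarrow> (\<Sum>F\<in>A. if P F then 1 else 0 :: real) = real (card (A \<inter> {F. P F}))"
proof -
  assume fA: "finite A"
  have "(\<Sum>F\<in>A. if P F then 1 else 0 :: real) = (\<Sum>F\<in>{F\<in>A. P F}. 1)"
    using sum.inter_filter[OF fA, of "\<lambda>_. 1::real" P] by simp
  also have "\<dots> = real (card {F\<in>A. P F})" by simp
  also have "{F\<in>A. P F} = A \<inter> {F. P F}" by auto
  finally show ?thesis .
qed

lemma iso_bound:
  assumes m: "4 \<le> m" and n: "2 \<le> n"
  shows "2 - real (m choose 2) / real ((m - 2) choose 2)
           - real (m choose 2) ^ (n - 1) / (real n * real ((m - 2) choose 2) ^ (n - 1))
         \<le> measure_pmf.prob (RIG n m 2) {F. \<not> rig_connected n F}"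
proof -
  let ?\<Omega> = "colour_assignments n m 2"
  define N where "N = real (m choose 2)"
  define b where "b = real ((m - 2) choose 2)"
  define d where "d = real ((m - 4) choose 2)"
  define c where "c = real (card ?\<Omega>)"
  define X where "X = (\<lambda>F. \<Sum>v<n. if iso n F v then 1 else 0 :: real)"
  obtain j where j: "n = j + 2" using n by (metis add.commute le_iff_add)
  have m2: "2 \<le> m" using m by simp
  have N0: "0 < N" unfolding N_def using m by (simp add: zero_less_binomial_iff)
  have b0: "0 < b" unfolding b_def using m by (simp add: zero_less_binomial_iff)
  have d0: "0 \<le> d" unfolding d_def by simp
  have Nd: "N * d \<le> b^2" unfolding N_def b_def d_def by (rule Nd_le[OF m])
  have fin: "finite ?\<Omega>" by (rule finite_Omega)
  have c_eq: "c = N ^ n" unfolding c_def N_def by (simp add: card_Omega)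
  have c0: "0 < c" unfolding c_eq using N0 by simp
  have S1: "(\<Sum>F\<in>?\<Omega>. X F) = real n * (N * b ^ (n - 1))"
  proof -
    have "(\<Sum>F\<in>?\<Omega>. X F) = (\<Sum>v<n. \<Sum>F\<in>?\<Omega>. if iso n F v then 1 else 0 :: real)"
      unfolding X_def by (rule sum.swap)
    also have "\<dots> = (\<Sum>v<n. N * b ^ (n - 1))"
      by (intro sum.cong refl) (simp add: sum_ind[OF fin] card_iso N_def b_def)
    finally show ?thesis by simp
  qed
  have S2: "(\<Sum>F\<in>?\<Omega>. (X F)^2) = real n * (N * b ^ (n - 1) + real (n - 1) * (N * b * d ^ (n - 2)))"
  proof -
    have "(\<Sum>F\<in>?\<Omega>. (X F)^2) = (\<Sum>F\<in>?\<Omega>. \<Sum>u<n. \<Sum>v<n. if iso n F u \<and> iso n F v then 1 else 0 :: real)"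
      unfolding X_def power2_eq_square sum_product by (intro sum.cong refl) auto
    also have "\<dots> = (\<Sum>u<n. \<Sum>v<n. \<Sum>F\<in>?\<Omega>. if iso n F u \<and> iso n F v then 1 else 0 :: real)"
      by (simp add: sum.swap[of _ ?\<Omega>])
    also have "\<dots> = (\<Sum>u<n. N * b ^ (n - 1) + real (n - 1) * (N * b * d ^ (n - 2)))"
    proof (intro sum.cong refl)
      fix u assume u: "u \<in> {..<n}"
      have "(\<Sum>v<n. \<Sum>F\<in>?\<Omega>. if iso n F u \<and> iso n F v then 1 else 0 :: real) =
            (\<Sum>F\<in>?\<Omega>. if iso n F u \<and> iso n F u then 1 else 0 :: real) +
            (\<Sum>v\<in>{..<n} - {u}. \<Sum>F\<in>?\<Omega>. if iso n F u \<and> iso n F v then 1 else 0 :: real)"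
        using u by (subst sum.remove[of _ u]) auto
      also have "(\<Sum>F\<in>?\<Omega>. if iso n F u \<and> iso n F u then 1 else 0 :: real) = N * b ^ (n - 1)"
        using u by (simp add: sum_ind[OF fin] card_iso N_def b_def)
      also have "(\<Sum>v\<in>{..<n} - {u}. \<Sum>F\<in>?\<Omega>. if iso n F u \<and> iso n F v then 1 else 0 :: real) =
                 (\<Sum>v\<in>{..<n} - {u}. N * b * d ^ (n - 2))"
        using u by (intro sum.cong refl) (simp add: sum_ind[OF fin] card_iso2 N_def b_def d_def)
      also have "\<dots> = real (n - 1) * (N * b * d ^ (n - 2))" using u by simp
      finally show "(\<Sum>v<n. \<Sum>F\<in>?\<Omega>. if iso n F u \<and> iso n F v then 1 else 0 :: real) =
         N * b ^ (n - 1) + real (n - 1) * (N * b * d ^ (n - 2))" .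
    qed
    also have "\<dots> = real n * (N * b ^ (n - 1) + real (n - 1) * (N * b * d ^ (n - 2)))"
      by (simp only: sum_constant card_lessThan)
    finally show ?thesis .
  qed
  have S10: "0 < (\<Sum>F\<in>?\<Omega>. X F)" unfolding S1 using n N0 b0 by simp
  have ch: "real (card {F\<in>?\<Omega>. X F = 0}) * (\<Sum>F\<in>?\<Omega>. X F)^2 \<le> c * (c * (\<Sum>F\<in>?\<Omega>. (X F)^2) - (\<Sum>F\<in>?\<Omega>. X F)^2)"
    unfolding c_def by (rule cheb[OF fin])
  have Z: "real (card {F\<in>?\<Omega>. X F = 0}) / c \<le> c * (\<Sum>F\<in>?\<Omega>. (X F)^2) / (\<Sum>F\<in>?\<Omega>. X F)^2 - 1"
    using ch c0 S10 by (simp add: field_simps)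
  have alg: "c * (\<Sum>F\<in>?\<Omega>. (X F)^2) / (\<Sum>F\<in>?\<Omega>. X F)^2 \<le> N ^ (n - 1) / (real n * b ^ (n - 1)) + N / b"
  proof -
    have "c * (\<Sum>F\<in>?\<Omega>. (X F)^2) / (\<Sum>F\<in>?\<Omega>. X F)^2 =
      N ^ (j + 2) * (real (j + 2) * N * b ^ (j + 1) + real (j + 2) * real (j + 1) * N * b * d ^ j) /
           (real (j + 2) * N * b ^ (j + 1))^2"
      unfolding S1 S2 c_eq by (simp add: j algebra_simps)
    also have "\<dots> \<le> N ^ (j + 1) / (real (j + 2) * b ^ (j + 1)) + N / b" by (rule alg2[OF N0 b0 d0 Nd])
    finally show ?thesis unfolding j by simp
  qed
  have conn_sub: "?\<Omega> \<inter> {F. rig_connected n F} \<subseteq> {F\<in>?\<Omega>. X F = 0}"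
  proof
    fix F assume F: "F \<in> ?\<Omega> \<inter> {F. rig_connected n F}"
    then have "\<forall>v<n. \<not> iso n F v" using iso_disc[OF n] by blast
    then have "X F = 0" unfolding X_def by simp
    then show "F \<in> {F\<in>?\<Omega>. X F = 0}" using F by simp
  qed
  have "real (card (?\<Omega> \<inter> {F. rig_connected n F})) \<le> real (card {F\<in>?\<Omega>. X F = 0})"
    using conn_sub fin by (intro of_nat_mono card_mono) auto
  then have pc: "measure_pmf.prob (RIG n m 2) {F. rig_connected n F} \<le> real (card {F\<in>?\<Omega>. X F = 0}) / c"
    unfolding prob_RIG[OF m2] c_def using c0 c_def by (intro divide_right_mono) auto
  have "measure_pmf.prob (RIG n m 2) {F. \<not> rig_connected n F} = 1 - measure_pmf.prob (RIG n m 2) {F. rig_connected n F}"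
    using prob_compl_conn[of "RIG n m 2" "rig_connected n"] by simp
  then show ?thesis using pc Z alg unfolding N_def b_def by linarith
qed

lemma Nb_eq: assumes "4 \<le> m"
  shows "real (m choose 2) / real ((m - 2) choose 2) = real m * (real m - 1) / ((real m - 2) * (real m - 3))"
proof -
  have e: "real (m - 2) = real m - 2" using assms by auto
  have b: "real ((m - 2) choose 2) = (real m - 2) * (real m - 3) / 2" unfolding real_choose_two e by simp
  have N: "real (m choose 2) = real m * (real m - 1) / 2" unfolding real_choose_two by simp
  have nz: "(real m - 2) * (real m - 3) \<noteq> 0" using assms by simp
  show ?thesis unfolding b N using nz by (simp add: field_simps)
qed

lemma y_bound: fixes M :: real assumes "6 \<le> M"
  shows "M * (M - 1) / ((M - 2) * (M - 3)) - 1 \<le> 4 / M + 56 / M^2"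
proof -
  have p: "(M - 2) * (M - 3) > 0" "M > 0" using assms by auto
  have q4: "(M - 2) * (M - 3) \<ge> M^2 / 4"
  proof -
    have "(M - 2) * (M - 3) - M^2 / 4 = (3 * M * M - 20 * M + 24) / 4" by (simp add: power2_eq_square field_simps)
    moreover have "3 * M * M - 20 * M + 24 \<ge> 0"
    proof -
      have "(M - 6) * (3 * M - 2) \<ge> 0" using assms by simp
      moreover have "3 * M * M - 20 * M + 24 = (M - 6) * (3 * M - 2) + 12" by (simp add: algebra_simps)
      ultimately show ?thesis by linarith
    qed
    ultimately show ?thesis by simp
  qed
  have "M * (M - 1) / ((M - 2) * (M - 3)) - 1 = 4 / M + (14 * M - 24) / (M * ((M - 2) * (M - 3)))"
  proof -
    have nz: "M \<noteq> 0" "(M - 2) * (M - 3) \<noteq> 0" using p by auto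
    have "M * (M - 1) / ((M - 2) * (M - 3)) - 1 = (4 * M - 6) / ((M - 2) * (M - 3))"
      using nz by (simp add: field_simps)
    also have "\<dots> = 4 / M + (14 * M - 24) / (M * ((M - 2) * (M - 3)))"
    proof -
      define P where "P = (M - 2) * (M - 3)"
      have P0: "P \<noteq> 0" using nz unfolding P_def by simp
      have a: "4 / M = 4 * P / (M * P)" using P0 by simp
      have "4 / M + (14 * M - 24) / (M * P) = (4 * P + (14 * M - 24)) / (M * P)"
        unfolding a by (simp add: add_divide_distrib)
      also have "4 * P + (14 * M - 24) = M * (4 * M - 6)" unfolding P_def by (simp add: algebra_simps)
      also have "M * (4 * M - 6) / (M * P) = (4 * M - 6) / P" using nz by simp
      finally show ?thesis unfolding P_def by simp
    qed
    finally show ?thesis .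
  qed
  also have "(14 * M - 24) / (M * ((M - 2) * (M - 3))) \<le> (14 * M) / (M * (M^2 / 4))"
  proof (rule frac_le)
    show "0 \<le> 14 * M" using p by simp
    show "14 * M - 24 \<le> 14 * M" by simp
    show "0 < M * (M^2 / 4)" using p by simp
    show "M * (M^2 / 4) \<le> M * ((M - 2) * (M - 3))" using q4 p by (intro mult_left_mono) auto
  qed
  also have "(14 * M) / (M * (M^2 / 4)) = 56 / M^2" using p by (simp add: field_simps power2_eq_square)
  finally show ?thesis by simp
qed

lemma T_bound:
  fixes n m :: nat
  assumes m6: "6 \<le> m" and n2: "2 \<le> n" and D0: "4 * real n / real m \<le> ln (real n)"
    and big: "4 * (ln (real n))^2 \<le> real n"
  shows "real (m choose 2) ^ (n - 1) / (real n * real ((m - 2) choose 2) ^ (n - 1))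
         \<le> exp (1 - (ln (real n) - 4 * real n / real m))"
proof -
  define N where "N = real (m choose 2)"
  define b where "b = real ((m - 2) choose 2)"
  define q where "q = b / N"
  define y where "y = N / b - 1"
  have N0: "0 < N" unfolding N_def using m6 by (simp add: zero_less_binomial_iff)
  have b0: "0 < b" unfolding b_def using m6 by (simp add: zero_less_binomial_iff)
  have q0: "0 < q" unfolding q_def using N0 b0 by simp
  have yq: "1 / q = 1 + y" unfolding q_def y_def using N0 b0 by simp
  have y0: "0 \<le> y"
  proof -
    have "b \<le> N" unfolding b_def N_def by (intro of_nat_mono binomial_right_mono) simp
    then show ?thesis unfolding y_def using b0 by (simp add: field_simps)
  qed
  have M6: "real m \<ge> 6" using m6 by simp
  have yle: "y \<le> 4 / real m + 56 / (real m)^2"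
    unfolding y_def N_def b_def Nb_eq[of m] using m6 y_bound[OF M6] Nb_eq[of m] by simp
  have lnq: "- y \<le> ln q"
  proof -
    have "ln (1 / q) \<le> 1 / q - 1" using q0 by (intro ln_le_minus_one) simp
    moreover have "ln (1 / q) = - ln q" using q0 by (simp add: ln_div)
    ultimately show ?thesis using yq by simp
  qed
  have n0: "0 < real n" using n2 by simp
  have ln0: "0 < ln (real n)" using n2 by simp
  have mbig: "56 * real n / (real m)^2 \<le> 1"
  proof -
    have m0: "0 < real m" using m6 by simp
    have "4 * real n \<le> ln (real n) * real m" using D0 m0 by (simp add: field_simps)
    then have "(4 * real n)^2 \<le> (ln (real n) * real m)^2" using n0 by (intro power_mono) auto
    then have "16 * real n * real n \<le> (ln (real n))^2 * (real m)^2" by (simp add: power2_eq_square algebra_simps)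
    also have "\<dots> \<le> (real n / 4) * (real m)^2" using big by (intro mult_right_mono) auto
    finally have "64 * real n \<le> (real m)^2" using n0 by (simp add: power2_eq_square algebra_simps)
    then show ?thesis using m0 by (simp add: field_simps)
  qed
  have "exp (ln (real n) - 4 * real n / real m - 1) \<le> exp (ln (real n) - real n * y)"
  proof (subst exp_le_cancel_iff)
    have "real n * y \<le> real n * (4 / real m + 56 / (real m)^2)" using yle n0 by (intro mult_left_mono) auto
    also have "\<dots> = 4 * real n / real m + 56 * real n / (real m)^2" by (simp add: algebra_simps)
    finally show "ln (real n) - 4 * real n / real m - 1 \<le> ln (real n) - real n * y" using mbig by linarith
  qed
  also have "\<dots> = real n * exp (- (real n * y))"
  proof -
    have "exp (ln (real n) - real n * y) = exp (ln (real n)) * exp (- (real n * y))"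
      by (simp only: diff_conv_add_uminus exp_add)
    then show ?thesis using n0 by simp
  qed
  also have "\<dots> \<le> real n * q ^ (n - 1)"
  proof (intro mult_left_mono)
    have "- (real n * y) \<le> - (real (n - 1) * y)" using y0 by (intro le_imp_neg_le mult_right_mono) auto
    also have "\<dots> \<le> real (n - 1) * ln q"
    proof -
      have "real (n - 1) * (- y) \<le> real (n - 1) * ln q" using lnq by (intro mult_left_mono) auto
      then show ?thesis by simp
    qed
    finally have "exp (- (real n * y)) \<le> exp (real (n - 1) * ln q)" by simp
    also have "\<dots> = q ^ (n - 1)" using q0 by (simp add: exp_of_nat_mult)
    finally show "exp (- (real n * y)) \<le> q ^ (n - 1)" .
  qed simp
  finally have low: "exp (ln (real n) - 4 * real n / real m - 1) \<le> real n * q ^ (n - 1)" .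
  have "N ^ (n - 1) / (real n * b ^ (n - 1)) = 1 / (real n * q ^ (n - 1))"
    unfolding q_def using N0 b0 by (simp add: power_divide)
  also have "\<dots> \<le> 1 / exp (ln (real n) - 4 * real n / real m - 1)"
    using low n0 q0 by (intro divide_left_mono) auto
  also have "\<dots> = exp (1 - (ln (real n) - 4 * real n / real m))"
  proof -
    have "1 / exp (ln (real n) - 4 * real n / real m - 1) = exp (- (ln (real n) - 4 * real n / real m - 1))"
      by (simp only: exp_minus divide_inverse mult_1)
    also have "- (ln (real n) - 4 * real n / real m - 1) = 1 - (ln (real n) - 4 * real n / real m)" by simp
    finally show ?thesis .
  qed
  finally show ?thesis unfolding N_def b_def .
qed

lemma part2:
  fixes m :: "nat \<Rightarrow> nat"
  assumes m2: "\<forall>n. 2 \<le> m n"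
    and H: "filterlim (\<lambda>n. ln (real n) - 4 * real n / real (m n)) at_top sequentially"
  shows "(\<lambda>n. measure_pmf.prob (RIG n (m n) 2) {F. \<not> rig_connected n F}) \<longlonglongrightarrow> 1"
proof -
  define D where "D = (\<lambda>n. ln (real n) - 4 * real n / real (m n))"
  define R where "R = (\<lambda>n. real (m n choose 2) / real ((m n - 2) choose 2))"
  define T where "T = (\<lambda>n. real (m n choose 2) ^ (n - 1) / (real n * real ((m n - 2) choose 2) ^ (n - 1)))"
  define h where "h = (\<lambda>x::real. x * (x - 1) / ((x - 2) * (x - 3)))"
  have HD: "filterlim D at_top sequentially" using H unfolding D_def .
  have evD: "eventually (\<lambda>n. 0 \<le> D n) sequentially" using HD by (simp add: filterlim_at_top)
  have evbig: "eventually (\<lambda>n::nat. 4 * (ln (real n))^2 \<le> real n) sequentially" by real_asymp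
  have ev2: "eventually (\<lambda>n::nat. 2 \<le> n) sequentially" by (rule eventually_ge_at_top)
  have mlim: "filterlim (\<lambda>n. real (m n)) at_top sequentially"
  proof (rule filterlim_at_top_mono)
    show "filterlim (\<lambda>n::nat. 4 * real n / ln (real n)) at_top sequentially" by real_asymp
    show "eventually (\<lambda>n. 4 * real n / ln (real n) \<le> real (m n)) sequentially"
      using evD ev2
    proof eventually_elim
      case (elim n)
      have ln0: "0 < ln (real n)" using elim by simp
      have m0: "0 < real (m n)" using m2 by (metis not_numeral_le_zero of_nat_0_less_iff not_gr0)
      have "4 * real n / real (m n) \<le> ln (real n)" using elim unfolding D_def by simp
      then have "4 * real n \<le> ln (real n) * real (m n)" using m0 by (simp add: field_simps)
      then show ?case using ln0 by (simp add: field_simps mult.commute)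
    qed
  qed
  have ev6: "eventually (\<lambda>n. 6 \<le> m n) sequentially"
  proof -
    have "eventually (\<lambda>n. 6 \<le> real (m n)) sequentially" using mlim unfolding filterlim_at_top by blast
    then show ?thesis by eventually_elim simp
  qed
  have Rlim: "R \<longlonglongrightarrow> 1"
  proof -
    have "(h \<longlongrightarrow> 1) at_top" unfolding h_def by real_asymp
    from filterlim_compose[OF this mlim] have "(\<lambda>n. h (real (m n))) \<longlonglongrightarrow> 1" by (simp add: o_def)
    moreover have "eventually (\<lambda>n. h (real (m n)) = R n) sequentially"
      using ev6 by eventually_elim (simp add: h_def R_def Nb_eq)
    ultimately show ?thesis by (rule Lim_transform_eventually)
  qed
  have Tlim: "T \<longlonglongrightarrow> 0"
  proof (rule tendsto_sandwich[of "\<lambda>_. 0" _ _ "\<lambda>n. exp (1 - D n)"])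
    show "eventually (\<lambda>n. 0 \<le> T n) sequentially" unfolding T_def by simp
    show "eventually (\<lambda>n. T n \<le> exp (1 - D n)) sequentially"
      using ev6 ev2 evD evbig
    proof eventually_elim
      case (elim n)
      then have "4 * real n / real (m n) \<le> ln (real n)" unfolding D_def by simp
      then show ?case unfolding T_def D_def using T_bound[of "m n" n] elim by simp
    qed
    have "((\<lambda>x::real. exp (1 - x)) \<longlongrightarrow> 0) at_top" by real_asymp
    from filterlim_compose[OF this HD] show "(\<lambda>n. exp (1 - D n)) \<longlonglongrightarrow> 0" by (simp add: o_def)
  qed simp
  have Llim: "(\<lambda>n. 2 - R n - T n) \<longlonglongrightarrow> 2 - 1 - 0"
    by (intro tendsto_diff tendsto_const Rlim Tlim)
  show ?thesis
  proof (rule tendsto_sandwich[of "\<lambda>n. 2 - R n - T n" _ _ "\<lambda>_. 1"])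
    show "eventually (\<lambda>n. 2 - R n - T n \<le> measure_pmf.prob (RIG n (m n) 2) {F. \<not> rig_connected n F}) sequentially"
      using ev6 ev2
    proof eventually_elim
      case (elim n)
      then have "4 \<le> m n" by simp
      from iso_bound[OF this elim(2)] show ?case unfolding R_def T_def .
    qed
    show "eventually (\<lambda>n. measure_pmf.prob (RIG n (m n) 2) {F. \<not> rig_connected n F} \<le> 1) sequentially"
      by simp
    show "(\<lambda>n. 2 - R n - T n) \<longlonglongrightarrow> 1" using Llim by simp
  qed simp
qed

theorem theorem3:
  fixes m :: "nat \<Rightarrow> nat"
  assumes "\<forall>n. 2 \<le> m n"
  shows "(filterlim (\<lambda>n. 4 * real n / real (m n) - ln (real n)) at_top sequentially \<longrightarrow>
            (\<lambda>n. measure_pmf.prob (RIG n (m n) 2) {F. rig_connected n F}) \<longlonglongrightarrow> 1)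
       \<and> (filterlim (\<lambda>n. ln (real n) - 4 * real n / real (m n)) at_top sequentially \<longrightarrow>
            (\<lambda>n. measure_pmf.prob (RIG n (m n) 2) {F. \<not> rig_connected n F}) \<longlonglongrightarrow> 1)"
  using part1[OF assms] part2[OF assms] by blast

end
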